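(* Under the assumptions in the context, the discrete solution set $\mathcal M^\delta:=\{u^\delta_\mu:\mu\in\mathcal P\}$ is a compact subset of $\widehat{\mathcal X^\delta}:=(B^1)^*(\mathcal Y^\delta)+\dots+(B^{Q_b})^*(\mathcal Y^\delta)\subset L_2(\Omega)$, where $u_\mu^\delta\in\mathcal X_\mu^\delta:=B_\mu^*(\mathcal Y^\delta)$ is the unique solution of $(u^\delta_\mu,B_\mu^*v)_{L_2(\Omega)}=f_\mu(v)$ for all $v\in\mathcal Y^\delta$.
   Context: Let $\Omega\subset\mathbb R^n$ be a bounded polyhedral Lipschitz domain with outward normal $\vec n$, and $\mathcal P\subset\mathbb R^p$ compact. For each $\mu\in\mathcal P$ let $\vec b_\mu\in C^1(\bar\Omega)^n$, $c_\mu\in C^0(\bar\Omega)$ with $c_\mu-\tfrac12\nabla\cdot\vec b_\mu\ge0$, with $\mu$-independent $\Gamma_\pm=\{z\in\partial\Omega:\vec b_\mu\cdot\vec n\gtrless0\}$, and such that $B_{\mu;\circ}^*w:=-\vec b_\mu\cdot\nabla w+w(c_\mu-\nabla\cdot\vec b_\mu)$ on $C^1_{\Gamma_+}(\Omega):=\{v\in C^0(\bar\Omega)\cap C^1(\Omega):v|_{\Gamma_+}=0\}$ is injective with dense range in $L_2(\Omega)$. Let $\mathcal Y_\mu$ be the closure of $C^1_{\Gamma_+}(\Omega)$ under $\|v\|_{\mathcal Y_\mu}:=\|B^*_{\mu;\circ}v\|_{L_2(\Omega)}$, $B_\mu^*$ the continuous extension, $\bar{\mathcal Y}:=\bigcap_\mu\mathcal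 Y_\mu$ (dense in each $\mathcal Y_\mu$) with norm $\|v\|_{\bar{\mathcal Y}}:=\sup_\mu\|v\|_{\mathcal Y_\mu}$. Assume affine decompositions $B_\mu^*=\sum_{q=1}^{Q_b}\theta_b^q(\mu)(B^q)^*$, $f_\mu=\sum_{q=1}^{Q_f}\theta_f^q(\mu)f^q$ with $\theta^q_b,\theta^q_f\in C^0(\mathcal P)$, $(B^q)^*\in\mathcal L(\bar{\mathcal Y},L_2(\Omega))$, $f^q\in\bar{\mathcal Y}'$, and $f_\mu\in\mathcal Y_\mu'$ for all $\mu$ with $\sup_\mu\|f_\mu\|_{\mathcal Y_\mu'}<\infty$. Let $\mathcal Y^\delta\subset\bar{\mathcal Y}$ be a $\mu$-independent finite-dimensional subspace; $\widehat{\mathcal X^\delta}$ is equipped with the $L_2(\Omega)$ inner product. *)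

theory Defs
  imports "HOL-Analysis.Analysis"
begin

text \<open>Abstract rendering of the setting: the type 'h plays the role of L2(Omega)
(a real Hilbert space), the type 'y plays the role of Ybar (with its own norm),
Bq q plays the role of the adjoint operator (B^q)^*, fq q the functional f^q.\<close>

definition affine_op ::
  "(nat \<Rightarrow> 'p \<Rightarrow> real) \<Rightarrow> (nat \<Rightarrow> 'y \<Rightarrow> 'h::real_vector) \<Rightarrow> nat \<Rightarrow> 'p \<Rightarrow> 'y \<Rightarrow> 'h" where
  "affine_op \<theta> B Q \<mu> v = (\<Sum>q\<in>{1..Q}. \<theta> q \<mu> *\<^sub>R B q v)"

definition affine_fun ::
  "(nat \<Rightarrow> 'p \<Rightarrow> real) \<Rightarrow> (nat \<Rightarrow> 'y \<Rightarrow> real) \<Rightarrow> nat \<Rightarrow> 'p \<Rightarrow> 'y \<Rightarrow> real" where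
  "affine_fun \<theta> f Q \<mu> v = (\<Sum>q\<in>{1..Q}. \<theta> q \<mu> * f q v)"

definition Xhat :: "(nat \<Rightarrow> 'y \<Rightarrow> 'h::real_vector) \<Rightarrow> nat \<Rightarrow> 'y set \<Rightarrow> 'h set" where
  "Xhat B Q Yd = {\<Sum>q\<in>{1..Q}. B q (v q) | v. \<forall>q\<in>{1..Q}. v q \<in> Yd}"

definition is_galerkin_sol ::
  "('y \<Rightarrow> 'h::real_inner) \<Rightarrow> ('y \<Rightarrow> real) \<Rightarrow> 'y set \<Rightarrow> 'h \<Rightarrow> bool" where
  "is_galerkin_sol Bmu fmu Yd u \<longleftrightarrow> u \<in> Bmu ` Yd \<and> (\<forall>v\<in>Yd. inner u (Bmu v) = fmu v)"

definition galerkin_sol :: "('y \<Rightarrow> 'h::real_inner) \<Rightarrow> ('y \<Rightarrow> real) \<Rightarrow> 'y set \<Rightarrow> 'h" where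
  "galerkin_sol Bmu fmu Yd = (THE u. is_galerkin_sol Bmu fmu Yd u)"

end

theory Submission imports Defs begin

lemma span_seq_compact:
  fixes S :: "'a::real_normed_vector set"
  assumes "finite S"
  shows "\<forall>x::nat\<Rightarrow>'a. (\<forall>n. x n \<in> span S) \<and> bounded (range x) \<longrightarrow> (\<exists>l\<in>span S. \<exists>r. strict_mono r \<and> (x \<circ> r) \<longlonglongrightarrow> l)"
  using assms
proof (induction rule: finite_induct)
  case empty
  show ?case
  proof (intro allI impI)
    fix x :: "nat \<Rightarrow> 'a" assume "(\<forall>n. x n \<in> span {}) \<and> bounded (range x)"
    then have "x = (\<lambda>n. 0)" by auto
    then show "\<exists>l\<in>span {}. \<exists>r. strict_mono r \<and> (x \<circ> r) \<longlonglongrightarrow> l"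
    proof -
      have "strict_mono (id::nat\<Rightarrow>nat)" by (simp add: strict_mono_def)
      moreover have "(x \<circ> id) \<longlonglongrightarrow> 0" using \<open>x = (\<lambda>n. 0)\<close> by simp
      ultimately show ?thesis using span_zero by blast
    qed
  qed
next
  case (insert a S)
  have clS: "closed (span S)"
    unfolding closed_sequential_limits
  proof (intro allI impI)
    fix x l assume h: "(\<forall>n. x n \<in> span S) \<and> x \<longlonglongrightarrow> l"
    then have "bounded (range x)" using convergent_imp_bounded by blast
    with insert.IH h obtain l' r where "l' \<in> span S" "strict_mono r" "(x \<circ> r) \<longlonglongrightarrow> l'" by blast
    moreover have "(x \<circ> r) \<longlonglongrightarrow> l" using h \<open>strict_mono r\<close> LIMSEQ_subseq_LIMSEQ by blast
    ultimately show "l \<in> span S" using LIMSEQ_unique by metis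
  qed
  show ?case
  proof (cases "a \<in> span S")
    case True
    then have "span (insert a S) = span S" by (simp add: span_redundant)
    then show ?thesis using insert.IH by simp
  next
    case False
    have "open (- span S)" using clS by auto
    then obtain e where e: "e > 0" "ball a e \<subseteq> - span S" using False open_contains_ball by blast
    have de: "e \<le> dist a y" if "y \<in> span S" for y
      using e that by (force simp: subset_eq)
    have key: "\<bar>t\<bar> * e \<le> norm (y + t *\<^sub>R a)" if "y \<in> span S" for y t
    proof (cases "t = 0")
      case True then show ?thesis by simp
    next
      case False
      have "-(1/t) *\<^sub>R y \<in> span S" using that by (simp add: span_scale span_neg)
      then have "e \<le> dist a (-(1/t) *\<^sub>R y)" by (rule de)
      also have "dist a (-(1/t) *\<^sub>R y) = norm ((1/t) *\<^sub>R (y + t *\<^sub>R a))"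
        using False by (simp add: dist_norm algebra_simps)
      also have "\<dots> = norm (y + t *\<^sub>R a) / \<bar>t\<bar>" by simp
      finally show ?thesis using False by (simp add: field_simps)
    qed
    show ?thesis
    proof (intro allI impI)
      fix x :: "nat \<Rightarrow> 'a" assume h: "(\<forall>n. x n \<in> span (insert a S)) \<and> bounded (range x)"
      then obtain M where M: "\<And>n. norm (x n) \<le> M" by (auto simp: bounded_iff)
      have "\<forall>n. \<exists>t. x n - t *\<^sub>R a \<in> span S" using h span_breakdown_eq by blast
      then obtain t where t: "\<And>n. x n - t n *\<^sub>R a \<in> span S" by metis
      define y where "y n = x n - t n *\<^sub>R a" for n
      have y: "y n \<in> span S" for n using t y_def by simp
      have xy: "x n = y n + t n *\<^sub>R a" for n by (simp add: y_def)
      have tb: "\<bar>t n\<bar> \<le> M / e" for n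
        using key[of "y n" "t n"] y[of n] M[of n] e xy[of n] by (simp add: field_simps)
      have "bounded (range t)" using tb by (auto simp: bounded_iff intro!: exI[of _ "M/e"])
      then obtain lt r1 where r1: "strict_mono r1" "(t \<circ> r1) \<longlonglongrightarrow> lt"
        using bounded_imp_convergent_subsequence[of t] by blast
      have "norm (y n) \<le> M + M / e * norm a" for n
      proof -
        have "norm (y n) \<le> norm (x n) + norm (t n *\<^sub>R a)" using y_def norm_triangle_ineq4 by metis
        also have "\<dots> \<le> M + M / e * norm a"
          using M[of n] tb[of n] mult_right_mono[OF tb[of n] norm_ge_zero[of a]] by (intro add_mono) auto
        finally show ?thesis .
      qed
      then have "bounded (range (y \<circ> r1))" by (auto simp: bounded_iff)
      then obtain ly r2 where r2: "ly \<in> span S" "strict_mono r2" "(y \<circ> r1 \<circ> r2) \<longlonglongrightarrow> ly"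
        using insert.IH y by (metis comp_apply)
      have "(t \<circ> r1 \<circ> r2) \<longlonglongrightarrow> lt" using r1 r2 LIMSEQ_subseq_LIMSEQ by blast
      then have "((\<lambda>n. (y \<circ> r1 \<circ> r2) n + (t \<circ> r1 \<circ> r2) n *\<^sub>R a)) \<longlonglongrightarrow> ly + lt *\<^sub>R a"
        using r2 by (intro tendsto_intros)
      then have "(x \<circ> (r1 \<circ> r2)) \<longlonglongrightarrow> ly + lt *\<^sub>R a" by (simp add: xy o_def)
      moreover have "ly + lt *\<^sub>R a \<in> span (insert a S)"
        using r2 by (meson span_add span_base span_mono span_scale insertI1 subset_insertI subsetD)
      moreover have "strict_mono (r1 \<circ> r2)" using r1 r2 strict_mono_o by blast
      ultimately show "\<exists>l\<in>span (insert a S). \<exists>r. strict_mono r \<and> (x \<circ> r) \<longlonglongrightarrow> l" by blast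
    qed
  qed
qed


lemma galerkin_exists_unique:
  fixes Bm :: "'y::real_vector \<Rightarrow> 'h::real_inner" and fm :: "'y \<Rightarrow> real"
  assumes lB: "linear Bm" and lf: "linear fm" and iB: "inj Bm" and sY: "subspace Yd"
    and fE: "finite E" and sE: "span E = Yd"
  shows "\<exists>!u. is_galerkin_sol Bm fm Yd u"
proof -
  have X: "Bm ` Yd = span (Bm ` E)" using sE span_linear_image[OF lB] by metis
  obtain C where C: "finite C" "span C = span (Bm ` E)" "pairwise orthogonal C"
    using basis_orthogonal[of "Bm ` E"] fE by blast
  have "\<forall>c\<in>C. \<exists>y\<in>Yd. Bm y = c"
    using C(2) X span_base by (metis image_iff)
  then obtain yc where yc: "\<And>c. c \<in> C \<Longrightarrow> yc c \<in> Yd \<and> Bm (yc c) = c" by metis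
  define u where "u = (\<Sum>c\<in>C. (fm (yc c) / (c \<bullet> c)) *\<^sub>R c)"
  have uX: "u \<in> Bm ` Yd" unfolding u_def X C(2)[symmetric]
    by (intro span_sum span_scale span_base)
  have uc: "u \<bullet> c = fm (yc c)" if c: "c \<in> C" for c
  proof (cases "c = 0")
    case True
    have "Bm (yc c) = Bm 0" using yc[OF c] True linear_0[OF lB] by simp
    then have "yc c = 0" using iB by (simp add: inj_eq)
    then show ?thesis using True linear_0[OF lf] by simp
  next
    case False
    have "u \<bullet> c = (\<Sum>c'\<in>C. (fm (yc c') / (c' \<bullet> c')) * (c' \<bullet> c))"
      unfolding u_def by (simp add: inner_sum_left)
    also have "\<dots> = (fm (yc c) / (c \<bullet> c)) * (c \<bullet> c)"
    proof (rule sum.remove[OF C(1) c, THEN trans])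
      have "\<And>c'. c' \<in> C - {c} \<Longrightarrow> c' \<bullet> c = 0"
        using C(3) c by (auto simp: pairwise_def orthogonal_def)
      then show "fm (yc c) / (c \<bullet> c) * (c \<bullet> c) + (\<Sum>c'\<in>C - {c}. fm (yc c') / (c' \<bullet> c') * (c' \<bullet> c)) =
          fm (yc c) / (c \<bullet> c) * (c \<bullet> c)" by simp
    qed
    also have "\<dots> = fm (yc c)" using False by simp
    finally show ?thesis .
  qed
  have sol: "is_galerkin_sol Bm fm Yd u"
    unfolding is_galerkin_sol_def
  proof (intro conjI ballI uX)
    fix v assume v: "v \<in> Yd"
    then have "Bm v \<in> span C" using X C(2) by blast
    then obtain a where a: "Bm v = (\<Sum>c\<in>C. a c *\<^sub>R c)" using span_finite[OF C(1)] by blast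
    have "Bm v = Bm (\<Sum>c\<in>C. a c *\<^sub>R yc c)"
      unfolding a linear_sum[OF lB] linear_scale[OF lB] using yc by (intro sum.cong) auto
    then have vv: "v = (\<Sum>c\<in>C. a c *\<^sub>R yc c)" using iB by (simp add: inj_eq)
    have "u \<bullet> Bm v = (\<Sum>c\<in>C. a c * (u \<bullet> c))" unfolding a by (simp add: inner_sum_right)
    also have "\<dots> = (\<Sum>c\<in>C. a c * fm (yc c))" using uc by simp
    also have "\<dots> = fm v" unfolding vv linear_sum[OF lf] linear_scale[OF lf] by simp
    finally show "u \<bullet> Bm v = fm v" .
  qed
  moreover have "w = u" if w: "is_galerkin_sol Bm fm Yd w" for w
  proof -
    obtain a b where ab: "a \<in> Yd" "b \<in> Yd" "w = Bm a" "u = Bm b"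
      using w sol unfolding is_galerkin_sol_def by blast
    have d: "a - b \<in> Yd" using ab sY by (simp add: subspace_diff)
    have "w \<bullet> Bm (a - b) = u \<bullet> Bm (a - b)"
      using w sol d unfolding is_galerkin_sol_def by simp
    then have "(w - u) \<bullet> (w - u) = 0"
      using ab linear_diff[OF lB] by (simp add: inner_diff_left)
    then show ?thesis by simp
  qed
  ultimately show ?thesis by blast
qed


theorem corollary4p5:
  fixes P :: "'p::euclidean_space set"
    and \<theta>b \<theta>f :: "nat \<Rightarrow> 'p \<Rightarrow> real"
    and Bq :: "nat \<Rightarrow> 'y::real_normed_vector \<Rightarrow> 'h::{real_inner, complete_space}"
    and fq :: "nat \<Rightarrow> 'y \<Rightarrow> real"
    and Yd :: "'y set"
    and Qb Qf :: nat
  assumes P_compact: "compact P"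
    and theta_b_cont: "\<forall>q\<in>{1..Qb}. continuous_on P (\<theta>b q)"
    and theta_f_cont: "\<forall>q\<in>{1..Qf}. continuous_on P (\<theta>f q)"
    and Bq_bounded: "\<forall>q\<in>{1..Qb}. bounded_linear (Bq q)"
    and fq_bounded: "\<forall>q\<in>{1..Qf}. bounded_linear (fq q)"
    and Ybar_norm: "\<forall>v. norm v = (SUP \<mu>\<in>P. norm (affine_op \<theta>b Bq Qb \<mu> v))"
    and B_inj: "\<forall>\<mu>\<in>P. inj (affine_op \<theta>b Bq Qb \<mu>)"
    and f_bound: "\<exists>C. \<forall>\<mu>\<in>P. \<forall>v. \<bar>affine_fun \<theta>f fq Qf \<mu> v\<bar> \<le> C * norm (affine_op \<theta>b Bq Qb \<mu> v)"
    and Yd_subspace: "subspace Yd"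
    and Yd_findim: "\<exists>B. finite B \<and> span B = Yd"
  shows "(\<forall>\<mu>\<in>P. \<exists>!u. is_galerkin_sol (affine_op \<theta>b Bq Qb \<mu>) (affine_fun \<theta>f fq Qf \<mu>) Yd u)
       \<and> compact ((\<lambda>\<mu>. galerkin_sol (affine_op \<theta>b Bq Qb \<mu>) (affine_fun \<theta>f fq Qf \<mu>) Yd) ` P)
       \<and> (\<lambda>\<mu>. galerkin_sol (affine_op \<theta>b Bq Qb \<mu>) (affine_fun \<theta>f fq Qf \<mu>) Yd) ` P \<subseteq> Xhat Bq Qb Yd"
proof -
  define B where "B \<mu> = affine_op \<theta>b Bq Qb \<mu>" for \<mu>
  define F where "F \<mu> = affine_fun \<theta>f fq Qf \<mu>" for \<mu>
  define sol where "sol \<mu> = galerkin_sol (B \<mu>) (F \<mu>) Yd" for \<mu>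
  obtain E where E: "finite E" "span E = Yd" using Yd_findim by blast
  obtain C where C: "\<And>\<mu> v. \<mu> \<in> P \<Longrightarrow> \<bar>F \<mu> v\<bar> \<le> C * norm (B \<mu> v)"
    using f_bound unfolding F_def B_def by blast
  have linB: "linear (B \<mu>)" for \<mu>
  proof (rule linearI)
    fix x y show "B \<mu> (x + y) = B \<mu> x + B \<mu> y"
      unfolding B_def affine_op_def
      using Bq_bounded by (simp add: sum.distrib[symmetric] linear_add[OF bounded_linear.linear] scaleR_add_right)
  next
    fix c x show "B \<mu> (c *\<^sub>R x) = c *\<^sub>R B \<mu> x"
      unfolding B_def affine_op_def
      using Bq_bounded by (simp add: scaleR_sum_right linear_scale[OF bounded_linear.linear] mult.commute)
  qed
  have linF: "linear (F \<mu>)" for \<mu>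
  proof (rule linearI)
    fix x y show "F \<mu> (x + y) = F \<mu> x + F \<mu> y"
      unfolding F_def affine_fun_def
      using fq_bounded by (simp add: sum.distrib[symmetric] linear_add[OF bounded_linear.linear] distrib_left)
  next
    fix c x show "F \<mu> (c *\<^sub>R x) = c *\<^sub>R F \<mu> x"
      unfolding F_def affine_fun_def
      using fq_bounded by (simp add: sum_distrib_left linear_scale[OF bounded_linear.linear] mult.left_commute)
  qed
  have Bcont: "(\<lambda>n. B (\<mu>s n) (vs n)) \<longlonglongrightarrow> B \<mu> v"
    if "\<forall>n. \<mu>s n \<in> P" "\<mu> \<in> P" "\<mu>s \<longlonglongrightarrow> \<mu>" "vs \<longlonglongrightarrow> v" for \<mu>s vs \<mu> v
    unfolding B_def affine_op_def
  proof (intro tendsto_sum tendsto_scaleR)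
    fix q assume q: "q \<in> {1..Qb}"
    show "(\<lambda>n. \<theta>b q (\<mu>s n)) \<longlonglongrightarrow> \<theta>b q \<mu>"
      using theta_b_cont q that continuous_on_sequentially[of P "\<theta>b q"] by (auto simp: o_def)
    show "(\<lambda>n. Bq q (vs n)) \<longlonglongrightarrow> Bq q v"
      using Bq_bounded q that bounded_linear.tendsto by blast
  qed
  have Fcont: "(\<lambda>n. F (\<mu>s n) (vs n)) \<longlonglongrightarrow> F \<mu> v"
    if "\<forall>n. \<mu>s n \<in> P" "\<mu> \<in> P" "\<mu>s \<longlonglongrightarrow> \<mu>" "vs \<longlonglongrightarrow> v" for \<mu>s vs \<mu> v
    unfolding F_def affine_fun_def
  proof (intro tendsto_sum tendsto_mult)
    fix q assume q: "q \<in> {1..Qf}"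
    show "(\<lambda>n. \<theta>f q (\<mu>s n)) \<longlonglongrightarrow> \<theta>f q \<mu>"
      using theta_f_cont q that continuous_on_sequentially[of P "\<theta>f q"] by (auto simp: o_def)
    show "(\<lambda>n. fq q (vs n)) \<longlonglongrightarrow> fq q v"
      using fq_bounded q that bounded_linear.tendsto by blast
  qed
  have EU: "\<exists>!u. is_galerkin_sol (B \<mu>) (F \<mu>) Yd u" if "\<mu> \<in> P" for \<mu>
    using galerkin_exists_unique[OF linB linF _ Yd_subspace E] B_inj that unfolding B_def by blast
  have solP: "is_galerkin_sol (B \<mu>) (F \<mu>) Yd (sol \<mu>)" if "\<mu> \<in> P" for \<mu>
    unfolding sol_def galerkin_sol_def using theI'[OF EU[OF that]] .
  have solU: "u = sol \<mu>" if "\<mu> \<in> P" "is_galerkin_sol (B \<mu>) (F \<mu>) Yd u" for \<mu> u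
    using EU[OF that(1)] solP[OF that(1)] that(2) by blast
  have solbound: "norm (sol \<mu>) \<le> \<bar>C\<bar>" if \<mu>: "\<mu> \<in> P" for \<mu>
  proof -
    obtain v where v: "v \<in> Yd" "sol \<mu> = B \<mu> v" using solP[OF \<mu>] unfolding is_galerkin_sol_def by blast
    have "norm (sol \<mu>) ^ 2 = sol \<mu> \<bullet> B \<mu> v" using v by (simp add: power2_norm_eq_inner)
    also have "\<dots> = F \<mu> v" using solP[OF \<mu>] v unfolding is_galerkin_sol_def by blast
    also have "\<dots> \<le> C * norm (sol \<mu>)" using C[OF \<mu>, of v] v by simp
    finally have h: "norm (sol \<mu>) ^ 2 \<le> C * norm (sol \<mu>)" .
    show ?thesis
    proof (cases "norm (sol \<mu>) = 0")
      case True then show ?thesis by simp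
    next
      case False
      then have "norm (sol \<mu>) > 0" by simp
      with h have "norm (sol \<mu>) \<le> C" by (simp add: power2_eq_square)
      then show ?thesis by simp
    qed
  qed
  have Pseq: "seq_compact P" using P_compact compact_eq_seq_compact_metric by blast
  have lower: "\<exists>m>0. \<forall>\<mu>\<in>P. \<forall>v\<in>Yd. m * norm v \<le> norm (B \<mu> v)"
  proof (rule ccontr)
    assume neg: "\<not> ?thesis"
    have "\<forall>k::nat. \<exists>\<mu>\<in>P. \<exists>v\<in>Yd. norm (B \<mu> v) < (1 / Suc k) * norm v"
    proof
      fix k :: nat
      have "(1 / real (Suc k)) > 0" by simp
      then have "\<not> (\<forall>\<mu>\<in>P. \<forall>v\<in>Yd. (1 / real (Suc k)) * norm v \<le> norm (B \<mu> v))"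
        using neg by blast
      then show "\<exists>\<mu>\<in>P. \<exists>v\<in>Yd. norm (B \<mu> v) < (1 / Suc k) * norm v" by (auto simp: not_le)
    qed
    then obtain \<mu>s vs where h: "\<And>k. \<mu>s k \<in> P" "\<And>k. vs k \<in> Yd"
      "\<And>k. norm (B (\<mu>s k) (vs k)) < (1 / Suc k) * norm (vs k)" by metis
    define ws where "ws k = (1 / norm (vs k)) *\<^sub>R vs k" for k
    have nz: "vs k \<noteq> 0" for k using h(3)[of k] by auto
    have ws1: "norm (ws k) = 1" for k using nz by (simp add: ws_def)
    have wsY: "ws k \<in> Yd" for k using h(2) Yd_subspace by (simp add: ws_def subspace_scale)
    have wsB: "norm (B (\<mu>s k) (ws k)) < 1 / Suc k" for k
    proof -
      have "norm (B (\<mu>s k) (ws k)) = norm (B (\<mu>s k) (vs k)) / norm (vs k)"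
        by (simp add: ws_def linear_scale[OF linB] divide_inverse mult.commute)
      also have "\<dots> < 1 / Suc k" using h(3)[of k] nz by (simp add: divide_less_eq)
      finally show ?thesis .
    qed
    have "\<exists>l\<in>P. \<exists>r. strict_mono r \<and> (\<mu>s \<circ> r) \<longlonglongrightarrow> l"
      using Pseq h(1) unfolding seq_compact_def by blast
    then obtain \<mu> r1 where r1: "\<mu> \<in> P" "strict_mono r1" "(\<mu>s \<circ> r1) \<longlonglongrightarrow> \<mu>" by blast
    have "bounded (range (ws \<circ> r1))" using ws1 by (auto simp: bounded_iff)
    moreover have "\<forall>n. (ws \<circ> r1) n \<in> span E" using wsY E(2) by simp
    ultimately have "\<exists>l\<in>span E. \<exists>r. strict_mono r \<and> (ws \<circ> r1 \<circ> r) \<longlonglongrightarrow> l"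
      using span_seq_compact[OF E(1)] by blast
    then obtain w r2 where r2: "w \<in> Yd" "strict_mono r2" "(ws \<circ> r1 \<circ> r2) \<longlonglongrightarrow> w"
      using E(2) by blast
    have m2: "(\<mu>s \<circ> r1 \<circ> r2) \<longlonglongrightarrow> \<mu>" using r1 r2 LIMSEQ_subseq_LIMSEQ by blast
    have inP: "\<forall>n. (\<mu>s \<circ> r1 \<circ> r2) n \<in> P" using h(1) by simp
    have "(\<lambda>n. B ((\<mu>s \<circ> r1 \<circ> r2) n) ((ws \<circ> r1 \<circ> r2) n)) \<longlonglongrightarrow> B \<mu> w"
      by (rule Bcont[OF inP r1(1) m2 r2(3)])
    then have lim1: "(\<lambda>n. norm (B ((\<mu>s \<circ> r1 \<circ> r2) n) ((ws \<circ> r1 \<circ> r2) n))) \<longlonglongrightarrow> norm (B \<mu> w)"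
      by (rule tendsto_norm)
    have sm: "strict_mono (r1 \<circ> r2)" using r1 r2 strict_mono_o by blast
    have "(\<lambda>n. norm (B ((\<mu>s \<circ> r1 \<circ> r2) n) ((ws \<circ> r1 \<circ> r2) n))) \<longlonglongrightarrow> 0"
    proof (rule tendsto_sandwich[of "\<lambda>_. 0" _ _ "\<lambda>n. 1 / Suc n"])
      show "\<forall>\<^sub>F n in sequentially. 0 \<le> norm (B ((\<mu>s \<circ> r1 \<circ> r2) n) ((ws \<circ> r1 \<circ> r2) n))" by simp
      show "\<forall>\<^sub>F n in sequentially. norm (B ((\<mu>s \<circ> r1 \<circ> r2) n) ((ws \<circ> r1 \<circ> r2) n)) \<le> 1 / Suc n"
      proof (rule always_eventually, rule allI)
        fix n
        have "n \<le> (r1 \<circ> r2) n" using seq_suble[OF sm] by blast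
        then have "real (Suc n) \<le> real (Suc ((r1 \<circ> r2) n))" by simp
        then have "1 / real (Suc ((r1 \<circ> r2) n)) \<le> 1 / real (Suc n)"
          by (intro divide_left_mono) auto
        moreover have "norm (B ((\<mu>s \<circ> r1 \<circ> r2) n) ((ws \<circ> r1 \<circ> r2) n)) < 1 / real (Suc ((r1 \<circ> r2) n))"
          using wsB[of "(r1 \<circ> r2) n"] by (simp only: comp_apply)
        ultimately show "norm (B ((\<mu>s \<circ> r1 \<circ> r2) n) ((ws \<circ> r1 \<circ> r2) n)) \<le> 1 / Suc n" by linarith
      qed
      show "(\<lambda>_. 0) \<longlonglongrightarrow> (0::real)" by simp
      show "(\<lambda>n. 1 / real (Suc n)) \<longlonglongrightarrow> 0" using LIMSEQ_Suc[OF lim_inverse_n'] by simp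
    qed
    then have "norm (B \<mu> w) = 0" by (rule LIMSEQ_unique[OF lim1])
    then have "B \<mu> w = B \<mu> 0" using linear_0[OF linB] by simp
    moreover have "inj (B \<mu>)" using B_inj r1(1) unfolding B_def by blast
    ultimately have w0: "w = 0" by (meson injD)
    have e1: "(\<lambda>n. norm ((ws \<circ> r1 \<circ> r2) n)) = (\<lambda>n. 1)" by (rule ext) (simp add: ws1)
    have "(\<lambda>n. 1::real) \<longlonglongrightarrow> norm w" using tendsto_norm[OF r2(3)] unfolding e1 .
    then have "1 = norm w" by (rule LIMSEQ_unique[OF tendsto_const])
    then show False using w0 by simp
  qed
  then obtain m where m: "m > 0" "\<And>\<mu> v. \<mu> \<in> P \<Longrightarrow> v \<in> Yd \<Longrightarrow> m * norm v \<le> norm (B \<mu> v)" by blast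
  have cpt: "compact (sol ` P)"
    unfolding compact_eq_seq_compact_metric seq_compact_def
  proof (intro allI impI)
    fix xs :: "nat \<Rightarrow> 'h" assume xs: "\<forall>n. xs n \<in> sol ` P"
    then have "\<forall>n. \<exists>\<mu>\<in>P. xs n = sol \<mu>" by blast
    then obtain \<mu>s where \<mu>s: "\<And>n. \<mu>s n \<in> P" "\<And>n. xs n = sol (\<mu>s n)" by metis
    have "\<forall>n. \<exists>v\<in>Yd. xs n = B (\<mu>s n) v"
    proof
      fix n
      have "sol (\<mu>s n) \<in> B (\<mu>s n) ` Yd" using solP[OF \<mu>s(1)[of n]] unfolding is_galerkin_sol_def by blast
      then obtain v where "v \<in> Yd" "sol (\<mu>s n) = B (\<mu>s n) v" by blast
      then show "\<exists>v\<in>Yd. xs n = B (\<mu>s n) v" using \<mu>s(2)[of n] by (intro bexI[of _ v]) auto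
    qed
    then obtain vs where vs: "\<And>n. vs n \<in> Yd" "\<And>n. xs n = B (\<mu>s n) (vs n)" by metis
    have vb: "norm (vs n) \<le> \<bar>C\<bar> / m" for n
    proof -
      have "m * norm (vs n) \<le> \<bar>C\<bar>"
        using m(2)[OF \<mu>s(1) vs(1), of n n] solbound[OF \<mu>s(1), of n] \<mu>s(2)[of n] vs(2)[of n] by simp
      then show ?thesis using m(1) by (simp add: field_simps)
    qed
    have "\<exists>l\<in>P. \<exists>r. strict_mono r \<and> (\<mu>s \<circ> r) \<longlonglongrightarrow> l"
      using Pseq \<mu>s(1) unfolding seq_compact_def by blast
    then obtain \<mu> r1 where r1: "\<mu> \<in> P" "strict_mono r1" "(\<mu>s \<circ> r1) \<longlonglongrightarrow> \<mu>" by blast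
    have "bounded (range (vs \<circ> r1))" using vb by (auto simp: bounded_iff)
    moreover have "\<forall>n. (vs \<circ> r1) n \<in> span E" using vs(1) E(2) by simp
    ultimately have "\<exists>l\<in>span E. \<exists>r. strict_mono r \<and> (vs \<circ> r1 \<circ> r) \<longlonglongrightarrow> l"
      using span_seq_compact[OF E(1)] by blast
    then obtain v r2 where r2: "v \<in> Yd" "strict_mono r2" "(vs \<circ> r1 \<circ> r2) \<longlonglongrightarrow> v"
      using E(2) by blast
    have m2: "(\<mu>s \<circ> r1 \<circ> r2) \<longlonglongrightarrow> \<mu>" using r1 r2 LIMSEQ_subseq_LIMSEQ by blast
    have sm: "strict_mono (r1 \<circ> r2)" using r1 r2 strict_mono_o by blast
    have inP: "\<forall>n. (\<mu>s \<circ> r1 \<circ> r2) n \<in> P" using \<mu>s(1) by simp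
    have exs: "xs \<circ> (r1 \<circ> r2) = (\<lambda>n. B ((\<mu>s \<circ> r1 \<circ> r2) n) ((vs \<circ> r1 \<circ> r2) n))"
      by (rule ext) (simp only: comp_apply vs(2))
    have xl: "(xs \<circ> (r1 \<circ> r2)) \<longlonglongrightarrow> B \<mu> v"
      unfolding exs by (rule Bcont[OF inP r1(1) m2 r2(3)])
    have "is_galerkin_sol (B \<mu>) (F \<mu>) Yd (B \<mu> v)"
      unfolding is_galerkin_sol_def
    proof (intro conjI ballI)
      show "B \<mu> v \<in> B \<mu> ` Yd" using r2(1) by blast
    next
      fix w assume w: "w \<in> Yd"
      have eq: "(\<lambda>n. (xs \<circ> (r1 \<circ> r2)) n \<bullet> B ((\<mu>s \<circ> r1 \<circ> r2) n) w) = (\<lambda>n. F ((\<mu>s \<circ> r1 \<circ> r2) n) w)"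
      proof (rule ext)
        fix n
        have "is_galerkin_sol (B (\<mu>s (r1 (r2 n)))) (F (\<mu>s (r1 (r2 n)))) Yd (sol (\<mu>s (r1 (r2 n))))"
          by (rule solP[OF \<mu>s(1)])
        then have "sol (\<mu>s (r1 (r2 n))) \<bullet> B (\<mu>s (r1 (r2 n))) w = F (\<mu>s (r1 (r2 n))) w"
          using w unfolding is_galerkin_sol_def by blast
        then show "(xs \<circ> (r1 \<circ> r2)) n \<bullet> B ((\<mu>s \<circ> r1 \<circ> r2) n) w = F ((\<mu>s \<circ> r1 \<circ> r2) n) w"
          by (simp only: comp_apply \<mu>s(2))
      qed
      have l1: "(\<lambda>n. (xs \<circ> (r1 \<circ> r2)) n \<bullet> B ((\<mu>s \<circ> r1 \<circ> r2) n) w) \<longlonglongrightarrow> B \<mu> v \<bullet> B \<mu> w"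
        by (rule tendsto_inner[OF xl Bcont[OF inP r1(1) m2 tendsto_const]])
      have l2: "(\<lambda>n. F ((\<mu>s \<circ> r1 \<circ> r2) n) w) \<longlonglongrightarrow> F \<mu> w"
        by (rule Fcont[OF inP r1(1) m2 tendsto_const])
      show "B \<mu> v \<bullet> B \<mu> w = F \<mu> w" using l1 unfolding eq by (rule LIMSEQ_unique[OF _ l2])
    qed
    then have "B \<mu> v = sol \<mu>" by (rule solU[OF r1(1)])
    then have "(xs \<circ> (r1 \<circ> r2)) \<longlonglongrightarrow> sol \<mu>" using xl by simp
    moreover have "sol \<mu> \<in> sol ` P" using r1(1) by blast
    ultimately show "\<exists>l\<in>sol ` P. \<exists>r. strict_mono r \<and> (xs \<circ> r) \<longlonglongrightarrow> l"
      using sm by blast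
  qed
  have sub: "sol ` P \<subseteq> Xhat Bq Qb Yd"
  proof
    fix u assume "u \<in> sol ` P"
    then obtain \<mu> where \<mu>: "\<mu> \<in> P" "u = sol \<mu>" by blast
    then obtain v where v: "v \<in> Yd" "u = B \<mu> v" using solP unfolding is_galerkin_sol_def by blast
    have "u = (\<Sum>q\<in>{1..Qb}. Bq q (\<theta>b q \<mu> *\<^sub>R v))"
      unfolding v B_def affine_op_def using Bq_bounded
      by (intro sum.cong) (auto simp: linear_scale[OF bounded_linear.linear])
    moreover have "\<forall>q\<in>{1..Qb}. \<theta>b q \<mu> *\<^sub>R v \<in> Yd" using v Yd_subspace by (simp add: subspace_scale)
    ultimately show "u \<in> Xhat Bq Qb Yd" unfolding Xhat_def
      by (intro CollectI exI[of _ "\<lambda>q. \<theta>b q \<mu> *\<^sub>R v"]) simp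
  qed
  have eqs: "B = affine_op \<theta>b Bq Qb" "F = affine_fun \<theta>f fq Qf"
    "sol = (\<lambda>\<mu>. galerkin_sol (affine_op \<theta>b Bq Qb \<mu>) (affine_fun \<theta>f fq Qf \<mu>) Yd)"
    by (auto simp: fun_eq_iff B_def F_def sol_def)
  have EU': "\<forall>\<mu>\<in>P. \<exists>!u. is_galerkin_sol (B \<mu>) (F \<mu>) Yd u" using EU by blast
  show ?thesis using EU' cpt sub unfolding eqs by (intro conjI)
qed

end
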